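(* Let $G=(V,E)$ be a finite connected graph with $n=|V|$ and let $\{u,v\}\in E$ be a bridge, whose removal separates $G$ into two connected components $G_1$, $G_2$ with vertex sets $V_1\ni u$ and $V_2\ni v$. Assume that $DK=n\mathbf{1}_n$ has a unique solution $K_G:V\to\mathbb{R}$ (the Steinerberger curvature of $G$). Then $$\sum_{x\in V_1}K_G(x)=\sum_{y\in V_2}K_G(y).$$
   Context: All graphs are finite, simple, connected and undirected, with the combinatorial shortest-path distance $d$. For $G=(V,E)$ with $V=\{v_1,\dots,v_n\}$, let $D=(d(v_i,v_j))_{i,j=1}^n$ be its distance matrix and $\mathbf{1}_n\in\mathbb{R}^n$ the all-ones column vector. The Steinerberger curvature $K\in\mathbb{R}^n$ (written $K_i$ or $K(v_i)$) is defined as follows: if $DK=n\mathbf{1}_n$ has a unique solution, $K$ is that solution; if it has several solutions, $K$ is a solution for which $\min_i K_i$ is maximal; if it has no solution, $K=nD^\dagger\mathbf{1}_n$ with $D^\dagger$ the Moore–Penrose pseudoinverse. A bridge is an edge whose removal disconnects the graph. *)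

theory Defs
  imports Complex_Main
begin

definition simple_graph :: "'a set \<Rightarrow> ('a \<Rightarrow> 'a \<Rightarrow> bool) \<Rightarrow> bool" where
  "simple_graph V E \<longleftrightarrow> finite V \<and> (\<forall>x y. E x y \<longrightarrow> x \<in> V \<and> y \<in> V)
     \<and> (\<forall>x y. E x y \<longrightarrow> E y x) \<and> (\<forall>x. \<not> E x x)"

definition graph_connected :: "'a set \<Rightarrow> ('a \<Rightarrow> 'a \<Rightarrow> bool) \<Rightarrow> bool" where
  "graph_connected V E \<longleftrightarrow> V \<noteq> {} \<and> (\<forall>x\<in>V. \<forall>y\<in>V. E\<^sup>*\<^sup>* x y)"

definition gdist :: "('a \<Rightarrow> 'a \<Rightarrow> bool) \<Rightarrow> 'a \<Rightarrow> 'a \<Rightarrow> nat" where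
  "gdist E x y = (LEAST k. (E ^^ k) x y)"

definition remove_edge :: "('a \<Rightarrow> 'a \<Rightarrow> bool) \<Rightarrow> 'a \<Rightarrow> 'a \<Rightarrow> ('a \<Rightarrow> 'a \<Rightarrow> bool)" where
  "remove_edge E u v = (\<lambda>a b. E a b \<and> {a, b} \<noteq> {u, v})"

definition is_bridge :: "'a set \<Rightarrow> ('a \<Rightarrow> 'a \<Rightarrow> bool) \<Rightarrow> 'a \<Rightarrow> 'a \<Rightarrow> bool" where
  "is_bridge V E u v \<longleftrightarrow> E u v \<and> \<not> graph_connected V (remove_edge E u v)"

definition component :: "'a set \<Rightarrow> ('a \<Rightarrow> 'a \<Rightarrow> bool) \<Rightarrow> 'a \<Rightarrow> 'a set" where
  "component V E x = {y \<in> V. E\<^sup>*\<^sup>* x y}"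

definition solves_curv_eq :: "'a set \<Rightarrow> ('a \<Rightarrow> 'a \<Rightarrow> bool) \<Rightarrow> ('a \<Rightarrow> real) \<Rightarrow> bool" where
  "solves_curv_eq V E K \<longleftrightarrow>
     (\<forall>i\<in>V. (\<Sum>j\<in>V. real (gdist E i j) * K j) = real (card V))"

definition unique_curv_solution :: "'a set \<Rightarrow> ('a \<Rightarrow> 'a \<Rightarrow> bool) \<Rightarrow> bool" where
  "unique_curv_solution V E \<longleftrightarrow> (\<exists>K. solves_curv_eq V E K) \<and>
     (\<forall>K1 K2. solves_curv_eq V E K1 \<and> solves_curv_eq V E K2 \<longrightarrow> (\<forall>x\<in>V. K1 x = K2 x))"

end

theory Submission
  imports Defs
begin

lemma sym_rtranclp:
  assumes "\<And>x y. R x y \<Longrightarrow> R y x" and "R\<^sup>*\<^sup>* x y" shows "R\<^sup>*\<^sup>* y x"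
  using assms(2)
proof (induction rule: rtranclp_induct)
  case base then show ?case by simp
next
  case (step y z)
  then show ?case by (meson assms(1) converse_rtranclp_into_rtranclp)
qed

lemma remove_edge_sym: "remove_edge E v u = remove_edge E u v"
  unfolding remove_edge_def by (auto simp: insert_commute)

lemma cover:
  assumes sg: "simple_graph V E" and con: "graph_connected V E" and uv: "E u v" and y: "y \<in> V"
  shows "(remove_edge E u v)\<^sup>*\<^sup>* u y \<or> (remove_edge E u v)\<^sup>*\<^sup>* v y"
proof -
  have uV: "u \<in> V" using sg uv unfolding simple_graph_def by blast
  have "E\<^sup>*\<^sup>* u y" using con uV y unfolding graph_connected_def by blast
  then show ?thesis
  proof (induction rule: rtranclp_induct)
    case base then show ?case by simp
  next
    case (step y z)
    show ?case
    proof (cases "{y, z} = {u, v}")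
      case True
      then have "z = u \<or> z = v" by (metis doubleton_eq_iff)
      then show ?thesis by auto
    next
      case False
      then have "remove_edge E u v y z" using step.hyps(2) unfolding remove_edge_def by simp
      then show ?thesis using step.IH by (meson rtranclp.rtrancl_into_rtrancl)
    qed
  qed
qed

lemma disjoint:
  assumes sg: "simple_graph V E" and con: "graph_connected V E" and br: "is_bridge V E u v"
  shows "component V (remove_edge E u v) u \<inter> component V (remove_edge E u v) v = {}"
proof (rule ccontr)
  let ?E = "remove_edge E u v"
  assume "component V ?E u \<inter> component V ?E v \<noteq> {}"
  then obtain w where w1: "?E\<^sup>*\<^sup>* u w" and w2: "?E\<^sup>*\<^sup>* v w"
    unfolding component_def by auto
  have symE: "\<And>x y. ?E x y \<Longrightarrow> ?E y x"
    using sg unfolding simple_graph_def remove_edge_def by (auto simp: insert_commute)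
  have symR: "\<And>a b. ?E\<^sup>*\<^sup>* a b \<Longrightarrow> ?E\<^sup>*\<^sup>* b a"
    using sym_rtranclp[of ?E] symE by blast
  have uv: "?E\<^sup>*\<^sup>* u v" using w1 symR[OF w2] by (meson rtranclp_trans)
  have Euv: "E u v" using br unfolding is_bridge_def by simp
  have reach: "?E\<^sup>*\<^sup>* u x" if "x \<in> V" for x
    using cover[OF sg con Euv that] uv by (meson rtranclp_trans)
  have "graph_connected V ?E"
    unfolding graph_connected_def
  proof (intro conjI ballI)
    show "V \<noteq> {}" using con unfolding graph_connected_def by simp
  next
    fix x y assume "x \<in> V" "y \<in> V"
    then show "?E\<^sup>*\<^sup>* x y" using reach symR by (meson rtranclp_trans)
  qed
  then show False using br unfolding is_bridge_def by simp
qed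

lemma cross:
  assumes sg: "simple_graph V E" and con: "graph_connected V E" and br: "is_bridge V E u v"
    and x: "x \<in> component V (remove_edge E u v) v" and y: "y \<in> component V (remove_edge E u v) u"
    and Exy: "E x y"
  shows "x = v \<and> y = u"
proof -
  let ?E = "remove_edge E u v"
  have dj: "component V ?E u \<inter> component V ?E v = {}" by (rule disjoint[OF sg con br])
  have "{x, y} = {u, v}"
  proof (rule ccontr)
    assume "{x, y} \<noteq> {u, v}"
    then have "?E x y" using Exy unfolding remove_edge_def by simp
    then have "y \<in> component V ?E v" using x y unfolding component_def
      by (auto intro: rtranclp.rtrancl_into_rtrancl)
    then show False using dj y by blast
  qed
  then have "(x = u \<and> y = v) \<or> (x = v \<and> y = u)" by (metis doubleton_eq_iff)
  moreover have "u \<in> component V ?E u" using sg br unfolding component_def simple_graph_def is_bridge_def by blast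
  ultimately show ?thesis using dj x by blast
qed

lemma walk_exists:
  assumes con: "graph_connected V E" and "x \<in> V" "y \<in> V"
  shows "(E ^^ gdist E x y) x y"
proof -
  have "E\<^sup>*\<^sup>* x y" using assms unfolding graph_connected_def by blast
  then obtain n where "(E ^^ n) x y" using rtranclp_imp_relpowp by metis
  then show ?thesis unfolding gdist_def by (rule LeastI)
qed

lemma gdist_le: "(E ^^ k) x y \<Longrightarrow> gdist E x y \<le> k"
  unfolding gdist_def by (rule Least_le)

lemma tri:
  assumes con: "graph_connected V E" and "u \<in> V" "x \<in> V" and "(E ^^ k) x j"
  shows "gdist E u j \<le> gdist E u x + k"
proof -
  have "(E ^^ gdist E u x) u x" using walk_exists assms by metis
  then have "(E ^^ (gdist E u x + k)) u j" using assms(4) unfolding relpowp_add by blast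
  then show ?thesis by (rule gdist_le)
qed

lemma dist:
  assumes sg: "simple_graph V E" and con: "graph_connected V E" and br: "is_bridge V E u v"
    and j: "j \<in> component V (remove_edge E u v) u"
  shows "gdist E v j = gdist E u j + 1"
proof -
  let ?E = "remove_edge E u v"
  let ?Cu = "component V ?E u" and ?Cv = "component V ?E v"
  have Euv: "E u v" using br unfolding is_bridge_def by simp
  have uV: "u \<in> V" and vV: "v \<in> V" using sg Euv unfolding simple_graph_def by blast+
  have jV: "j \<in> V" using j unfolding component_def by simp
  have dj: "?Cu \<inter> ?Cv = {}" by (rule disjoint[OF sg con br])
  have claim: "\<forall>x. (E ^^ k) x j \<longrightarrow> x \<in> ?Cv \<longrightarrow> gdist E u j + 1 \<le> k" for k
  proof (induction k)
    case 0
    then show ?case using j dj by auto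
  next
    case (Suc k)
    show ?case
    proof (intro allI impI)
      fix x assume w: "(E ^^ Suc k) x j" and x: "x \<in> ?Cv"
      then obtain y where Exy: "E x y" and wy: "(E ^^ k) y j" using relpowp_Suc_E2 by metis
      have yV: "y \<in> V" using sg Exy unfolding simple_graph_def by blast
      have "y \<in> ?Cu \<or> y \<in> ?Cv" using cover[OF sg con Euv yV] yV unfolding component_def by blast
      then show "gdist E u j + 1 \<le> Suc k"
      proof
        assume "y \<in> ?Cu"
        then have "y = u" using cross[OF sg con br x _ Exy] by blast
        then have "gdist E u j \<le> gdist E u u + k" using tri[OF con uV uV] wy by blast
        moreover have "gdist E u u = 0" proof -
          have "(E ^^ 0) u u" by simp
          then show ?thesis using gdist_le by fastforce
        qed
        ultimately show ?thesis by simp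
      next
        assume "y \<in> ?Cv"
        then show ?thesis using Suc.IH wy by fastforce
      qed
    qed
  qed
  have vC: "v \<in> ?Cv" using vV unfolding component_def by simp
  have ge: "gdist E u j + 1 \<le> gdist E v j"
    using claim walk_exists[OF con vV jV] vC by blast
  have "(E ^^ Suc (gdist E u j)) v j"
    using walk_exists[OF con uV jV] relpowp_Suc_I2 sg Euv unfolding simple_graph_def by metis
  then have "gdist E v j \<le> gdist E u j + 1" using gdist_le by fastforce
  with ge show ?thesis by simp
qed

theorem mainTheorem3:
  fixes V :: "'a set" and E :: "'a \<Rightarrow> 'a \<Rightarrow> bool" and u v :: 'a and K :: "'a \<Rightarrow> real"
  assumes "simple_graph V E"
    and "graph_connected V E"
    and "is_bridge V E u v"
    and "unique_curv_solution V E"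
    and "solves_curv_eq V E K"
  shows "(\<Sum>x\<in>component V (remove_edge E u v) u. K x)
       = (\<Sum>y\<in>component V (remove_edge E u v) v. K y)"
proof -
  note sg = assms(1) and con = assms(2) and br = assms(3)
  let ?E = "remove_edge E u v"
  let ?Cu = "component V ?E u" and ?Cv = "component V ?E v"
  have Euv: "E u v" using br unfolding is_bridge_def by simp
  have uV: "u \<in> V" and vV: "v \<in> V" using sg Euv unfolding simple_graph_def by blast+
  have fin: "finite V" using sg unfolding simple_graph_def by simp
  have br': "is_bridge V E v u" using br sg unfolding is_bridge_def simple_graph_def
    by (simp add: remove_edge_sym)
  have dj: "?Cu \<inter> ?Cv = {}" by (rule disjoint[OF sg con br])
  have Veq: "V = ?Cu \<union> ?Cv" using cover[OF sg con Euv] unfolding component_def by blast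
  have finu: "finite ?Cu" and finv: "finite ?Cv" using fin unfolding component_def by auto
  have d1: "\<And>j. j \<in> ?Cu \<Longrightarrow> gdist E v j = gdist E u j + 1" using dist[OF sg con br] by blast
  have d2: "\<And>j. j \<in> ?Cv \<Longrightarrow> gdist E u j = gdist E v j + 1"
    using dist[OF sg con br'] by (simp add: remove_edge_sym)
  have ru: "(\<Sum>j\<in>V. real (gdist E u j) * K j) = real (card V)"
    using assms(5) uV unfolding solves_curv_eq_def by blast
  have rv: "(\<Sum>j\<in>V. real (gdist E v j) * K j) = real (card V)"
    using assms(5) vV unfolding solves_curv_eq_def by blast
  define A where "A = (\<Sum>j\<in>?Cu. real (gdist E u j) * K j)"
  define B where "B = (\<Sum>j\<in>?Cv. real (gdist E v j) * K j)"
  have "(\<Sum>j\<in>V. real (gdist E u j) * K j) = A + (\<Sum>j\<in>?Cv. real (gdist E u j) * K j)"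
    unfolding A_def using sum.union_disjoint[OF finu finv dj] Veq by metis
  also have "(\<Sum>j\<in>?Cv. real (gdist E u j) * K j) = (\<Sum>j\<in>?Cv. real (gdist E v j) * K j + K j)"
    by (rule sum.cong) (auto simp: d2 algebra_simps)
  also have "\<dots> = B + (\<Sum>j\<in>?Cv. K j)" unfolding B_def by (simp add: sum.distrib)
  finally have e1: "(\<Sum>j\<in>V. real (gdist E u j) * K j) = A + B + (\<Sum>j\<in>?Cv. K j)" by simp
  have "(\<Sum>j\<in>V. real (gdist E v j) * K j) = (\<Sum>j\<in>?Cu. real (gdist E v j) * K j) + B"
    unfolding B_def using sum.union_disjoint[OF finu finv dj] Veq by metis
  also have "(\<Sum>j\<in>?Cu. real (gdist E v j) * K j) = (\<Sum>j\<in>?Cu. real (gdist E u j) * K j + K j)"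
    by (rule sum.cong) (auto simp: d1 algebra_simps)
  also have "\<dots> = A + (\<Sum>j\<in>?Cu. K j)" unfolding A_def by (simp add: sum.distrib)
  finally have e2: "(\<Sum>j\<in>V. real (gdist E v j) * K j) = A + (\<Sum>j\<in>?Cu. K j) + B" by simp
  show ?thesis using e1 e2 ru rv by linarith
qed

end
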